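(* Let $1<K<n$ and $x\in\mathbb{R}^n$, and let $s(x)$, $i_x$, $\delta(x)$, $u(x)$ be as defined in the context. Then: (1) for $i=1,\dots,K-1$: $s(x)_{i+1}-s(x)_i=\frac{1}{K-i+1}\big(s(x)_{i+1}-|x|_{[i]}\big)=\frac{1}{K-i}\big(s(x)_i-|x|_{[i]}\big)$; (2) $s(x)_1\ge\dots\ge s(x)_{i_x}$ and $s(x)_{i_x}\le\dots\le s(x)_K$; (3) $u(x)\ge_m|x|$; (4) $u(x)_1=\max\{|x|_{[1]},s(x)_1\}$.
   Context: For $v\in\mathbb{R}^n$, $v_{[i]}$ is the $i$-th largest component, and $|x|$ is the componentwise absolute value, so $|x|_{[i]}$ is the $i$-th largest absolute value. Define $s(x)_i=\frac{\sum_{j=i}^n|x|_{[j]}}{K-i+1}$ for $i=1,\dots,K$, and $s(x)_0=s(x)_{K+1}=\infty$. Let $i_x$ be the smallest index in $\{1,\dots,K\}$ minimizing $s(x)_i$, $\delta(x)=s(x)_{i_x}$, and define $u(x)\in\mathbb{R}^n$ by $u(x)_i=|x|_{[i]}$ for $i\le i_x-1$, $u(x)_i=\delta(x)$ for $i_x\le i\le K$, and $u(x)_i=0$ for $i>K$. $a\ge_m b$ means $\sum_{i=1}^j a_{[i]}\ge\sum_{i=1}^j b_{[i]}$ for $j<n$ with equality for $j=n$. *)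

theory Defs
  imports Main "HOL.Real"
begin

text \<open>Vectors x in R^n are represented as lists of reals of length n; components
and indices are 1-based as in the paper.\<close>

definition ord_comp :: "real list \<Rightarrow> nat \<Rightarrow> real" where
  "ord_comp v i = rev (sort v) ! (i - 1)"

definition abs_ord :: "real list \<Rightarrow> nat \<Rightarrow> real" where
  "abs_ord x i = ord_comp (map abs x) i"

text \<open>s(x)_i for i = 1..K (the conventions s_0 = s_(K+1) = infinity play no role here).\<close>
definition sK :: "nat \<Rightarrow> real list \<Rightarrow> nat \<Rightarrow> real" where
  "sK K x i = (\<Sum>j\<in>{i..length x}. abs_ord x j) / (real K - real i + 1)"

definition ix :: "nat \<Rightarrow> real list \<Rightarrow> nat" where
  "ix K x = (LEAST i. 1 \<le> i \<and> i \<le> K \<and> (\<forall>j\<in>{1..K}. sK K x i \<le> sK K x j))"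

definition delta :: "nat \<Rightarrow> real list \<Rightarrow> real" where
  "delta K x = sK K x (ix K x)"

text \<open>u(x), as a list of length n; component i (1-based) is at list position i-1.\<close>
definition uvec :: "nat \<Rightarrow> real list \<Rightarrow> real list" where
  "uvec K x = map (\<lambda>i. if i \<le> ix K x - 1 then abs_ord x i
                        else if i \<le> K then delta K x else 0) [1..<length x + 1]"

definition majorizes :: "real list \<Rightarrow> real list \<Rightarrow> bool" where
  "majorizes a b \<longleftrightarrow> length a = length b \<and>
     (\<forall>j<length a. (\<Sum>i=1..j. ord_comp a i) \<ge> (\<Sum>i=1..j. ord_comp b i)) \<and>
     (\<Sum>i=1..length a. ord_comp a i) = (\<Sum>i=1..length b. ord_comp b i)"

end

theory Submission
  imports Defs "HOL-Library.Multiset"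
begin

lemma abs_ord_nonneg: "1 \<le> j \<Longrightarrow> j \<le> length x \<Longrightarrow> 0 \<le> abs_ord x j"
proof -
  assume a: "1 \<le> j" "j \<le> length x"
  have "rev (sort (map abs x)) ! (j-1) \<in> set (rev (sort (map abs x)))"
    by (rule nth_mem) (use a in simp)
  then show ?thesis unfolding abs_ord_def ord_comp_def by auto
qed

lemma abs_ord_antimono: "1 \<le> i \<Longrightarrow> i \<le> j \<Longrightarrow> j \<le> length x \<Longrightarrow> abs_ord x j \<le> abs_ord x i"
proof -
  assume a: "1 \<le> i" "i \<le> j" "j \<le> length x"
  let ?l = "sort (map abs x)"
  have "?l ! (length x - Suc (j-1)) \<le> ?l ! (length x - Suc (i-1))"
    by (rule sorted_nth_mono) (use a in auto)
  then show ?thesis unfolding abs_ord_def ord_comp_def using a by (simp add: rev_nth)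
qed

lemma T_rec: "i \<le> length x \<Longrightarrow> (\<Sum>j\<in>{i..length x}. abs_ord x j) = abs_ord x i + (\<Sum>j\<in>{Suc i..length x}. abs_ord x j)"
  by (simp add: sum.atLeast_Suc_atMost)

lemma T_nonneg: "1 \<le> i \<Longrightarrow> 0 \<le> (\<Sum>j\<in>{i..length x}. abs_ord x j)"
  by (rule sum_nonneg) (auto intro: abs_ord_nonneg)

lemma step:
  assumes "1 \<le> i" "i < K" "K < length x"
  shows "sK K x (i+1) - sK K x i = (sK K x (i+1) - abs_ord x i) / (real K - real i + 1)
       \<and> sK K x (i+1) - sK K x i = (sK K x i - abs_ord x i) / (real K - real i)"
proof -
  define D where "D = real K - real i"
  have D: "D \<ge> 1" using assms unfolding D_def by simp
  define T where "T = (\<lambda>i. (\<Sum>j\<in>{i..length x}. abs_ord x j))"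
  have Tr: "T i = abs_ord x i + T (i+1)" unfolding T_def using T_rec[of i x] assms by simp
  have s1: "sK K x i = T i / (D+1)" unfolding sK_def T_def D_def by simp
  have s2: "sK K x (i+1) = T (i+1) / D" unfolding sK_def T_def D_def using assms by simp
  show ?thesis unfolding s1 s2 D_def[symmetric] Tr using D
    by (simp add: field_simps)
qed

lemma up_prop:
  assumes "1 \<le> i" "Suc i < K" "K < length x" "sK K x i \<le> sK K x (Suc i)"
  shows "sK K x (Suc i) \<le> sK K x (Suc (Suc i))"
proof -

  have e1: "sK K x (i+1) - sK K x i = (sK K x (i+1) - abs_ord x i) / (real K - real i + 1)"
    using step[of i K x] assms by simp
  have pos1: "real K - real i + 1 > 0" using assms by simp
  have "(sK K x (i+1) - abs_ord x i) / (real K - real i + 1) \<ge> 0" using e1 assms by simp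
  then have g: "sK K x (i+1) \<ge> abs_ord x i" using pos1
    by (simp add: zero_le_divide_iff)
  have m: "abs_ord x (Suc i) \<le> abs_ord x i" by (rule abs_ord_antimono) (use assms in auto)
  have e2: "sK K x (Suc i+1) - sK K x (Suc i) = (sK K x (Suc i) - abs_ord x (Suc i)) / (real K - real (Suc i))"
    using step[of "Suc i" K x] assms by simp
  have pos2: "real K - real (Suc i) > 0" using assms by simp
  have "(sK K x (Suc i) - abs_ord x (Suc i)) / (real K - real (Suc i)) \<ge> 0"
    using g m pos2 by simp
  then show ?thesis using e2 by simp
qed


lemma chain_up: "(\<And>k. i \<le> k \<Longrightarrow> k < j \<Longrightarrow> (f::nat\<Rightarrow>real) k \<le> f (Suc k)) \<Longrightarrow> i \<le> j \<Longrightarrow> f i \<le> f j"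
proof (induction j)
  case 0 then show ?case by simp
next
  case (Suc j)
  show ?case
  proof (cases "i = Suc j")
    case False
    then have "i \<le> j" using Suc.prems by simp
    then have "f i \<le> f j" using Suc by simp
    also have "f j \<le> f (Suc j)" using Suc.prems \<open>i \<le> j\<close> by simp
    finally show ?thesis .
  qed simp
qed

lemma chain_down: "(\<And>k. i \<le> k \<Longrightarrow> k < j \<Longrightarrow> (f::nat\<Rightarrow>real) (Suc k) \<le> f k) \<Longrightarrow> i \<le> j \<Longrightarrow> f j \<le> f i"
  using chain_up[of i j "\<lambda>k. - f k"] by simp

lemma up_chain:
  assumes "1 \<le> i" "i < K" "K < length x" "sK K x i \<le> sK K x (Suc i)"
  shows "\<forall>k. i \<le> k \<longrightarrow> k < K \<longrightarrow> sK K x k \<le> sK K x (Suc k)"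
proof (intro allI)
  fix k show "i \<le> k \<longrightarrow> k < K \<longrightarrow> sK K x k \<le> sK K x (Suc k)"
  proof (induction k)
    case 0 then show ?case using assms by simp
  next
    case (Suc k)
    show ?case
    proof (intro impI)
      assume h: "i \<le> Suc k" "Suc k < K"
      show "sK K x (Suc k) \<le> sK K x (Suc (Suc k))"
      proof (cases "i = Suc k")
        case True then show ?thesis using assms by simp
      next
        case False
        then have "i \<le> k" using h by simp
        then show ?thesis using Suc h assms up_prop[of k K x] by simp
      qed
    qed
  qed
qed

lemma ix_props:
  assumes "1 < K"
  shows "1 \<le> ix K x \<and> ix K x \<le> K \<and> (\<forall>j\<in>{1..K}. sK K x (ix K x) \<le> sK K x j)
    \<and> (\<forall>m. m < ix K x \<longrightarrow> \<not> (1 \<le> m \<and> m \<le> K \<and> (\<forall>j\<in>{1..K}. sK K x m \<le> sK K x j)))"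
proof -
  let ?S = "sK K x ` {1..K}"
  have ne: "?S \<noteq> {}" "finite ?S" using assms by auto
  obtain m where m: "m \<in> {1..K}" "sK K x m = Min ?S" using Min_in[OF ne(2) ne(1)] by auto
  have "\<forall>j\<in>{1..K}. sK K x m \<le> sK K x j" using m(2) ne by auto
  then have ex: "\<exists>i. 1 \<le> i \<and> i \<le> K \<and> (\<forall>j\<in>{1..K}. sK K x i \<le> sK K x j)" using m(1) by auto
  have "1 \<le> ix K x \<and> ix K x \<le> K \<and> (\<forall>j\<in>{1..K}. sK K x (ix K x) \<le> sK K x j)"
    unfolding ix_def by (rule LeastI_ex[OF ex])
  moreover have "\<forall>m. m < ix K x \<longrightarrow> \<not> (1 \<le> m \<and> m \<le> K \<and> (\<forall>j\<in>{1..K}. sK K x m \<le> sK K x j))"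
    unfolding ix_def using not_less_Least by blast
  ultimately show ?thesis by blast
qed

lemma strict_before:
  assumes "1 < K" "K < length x" "1 \<le> m" "m < ix K x"
  shows "sK K x (Suc m) < sK K x m"
proof (rule ccontr)
  assume "\<not> ?thesis"
  then have le: "sK K x m \<le> sK K x (Suc m)" by simp
  have ip: "1 \<le> ix K x" "ix K x \<le> K" "\<forall>j\<in>{1..K}. sK K x (ix K x) \<le> sK K x j"
    and nl: "\<not> (1 \<le> m \<and> m \<le> K \<and> (\<forall>j\<in>{1..K}. sK K x m \<le> sK K x j))"
    using ix_props[OF assms(1), of x] assms by auto
  have mK: "m < K" using assms ip by simp
  have ch: "\<forall>k. m \<le> k \<longrightarrow> k < K \<longrightarrow> sK K x k \<le> sK K x (Suc k)"
    using up_chain[OF assms(3) mK assms(2) le] .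
  have "\<forall>j\<in>{1..K}. sK K x m \<le> sK K x j"
  proof
    fix j assume j: "j \<in> {1..K}"
    show "sK K x m \<le> sK K x j"
    proof (cases "m \<le> j")
      case True
      show ?thesis by (rule chain_up[where f="sK K x"]) (use ch True j in auto)
    next
      case False
      have "sK K x m \<le> sK K x (ix K x)"
        by (rule chain_up[where f="sK K x"]) (use ch assms ip in auto)
      also have "\<dots> \<le> sK K x j" using ip j by auto
      finally show ?thesis .
    qed
  qed
  then show False using nl assms mK by auto
qed

lemma a_le_delta:
  assumes "1 < K" "K < length x"
  shows "abs_ord x (ix K x) \<le> sK K x (ix K x)"
proof -
  have ip: "1 \<le> ix K x" "ix K x \<le> K" "\<forall>j\<in>{1..K}. sK K x (ix K x) \<le> sK K x j"
    using ix_props[OF assms(1), of x] by auto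
  show ?thesis
  proof (cases "ix K x = K")
    case True
    have "sK K x K = (\<Sum>j\<in>{K..length x}. abs_ord x j)" unfolding sK_def by simp
    also have "\<dots> = abs_ord x K + (\<Sum>j\<in>{Suc K..length x}. abs_ord x j)" using T_rec[of K x] assms by simp
    also have "\<dots> \<ge> abs_ord x K" using T_nonneg[of "Suc K" x] by simp
    finally show ?thesis using True by simp
  next
    case False
    let ?i = "ix K x"
    have e: "sK K x (?i+1) - sK K x ?i = (sK K x ?i - abs_ord x ?i) / (real K - real ?i)"
      using step[of ?i K x] ip False assms by simp
    have "sK K x ?i \<le> sK K x (?i+1)" using ip False by auto
    then have "(sK K x ?i - abs_ord x ?i) / (real K - real ?i) \<ge> 0" using e by simp
    moreover have "real K - real ?i > 0" using ip False by simp
    ultimately show ?thesis by (simp add: zero_le_divide_iff)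
  qed
qed


lemma ord_comp_sorted:
  assumes "\<forall>i j. i \<le> j \<longrightarrow> j < length l \<longrightarrow> l!j \<le> l!i"
  shows "ord_comp l i = l!(i-1)"
proof -
  have "sorted (rev l)"
    unfolding sorted_iff_nth_mono using assms by (auto simp: rev_nth)
  then have "sort l = rev l" by (intro properties_for_sort) auto
  then show ?thesis unfolding ord_comp_def by simp
qed

lemma sum_split1: "(p::nat) \<le> m \<Longrightarrow> sum f {1..m} = sum f {1..p} + sum f {Suc p..m}"
proof -
  assume "p \<le> m"
  then have "{1..m} = {1..p} \<union> {Suc p..m}" by auto
  then show ?thesis by (simp add: sum.union_disjoint)
qed

theorem mainTheorem5:
  fixes x :: "real list" and K :: nat
  assumes "1 < K" and "K < length x"
  shows "(\<forall>i\<in>{1..K-1}.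
            sK K x (i+1) - sK K x i = (sK K x (i+1) - abs_ord x i) / (real K - real i + 1)
          \<and> sK K x (i+1) - sK K x i = (sK K x i - abs_ord x i) / (real K - real i))
       \<and> (\<forall>i j. 1 \<le> i \<and> i \<le> j \<and> j \<le> ix K x \<longrightarrow> sK K x j \<le> sK K x i)
       \<and> (\<forall>i j. ix K x \<le> i \<and> i \<le> j \<and> j \<le> K \<longrightarrow> sK K x i \<le> sK K x j)
       \<and> majorizes (uvec K x) (map abs x)
       \<and> uvec K x ! 0 = max (abs_ord x 1) (sK K x 1)"
proof -
  define n where "n = length x"
  define a where "a = abs_ord x"
  define s where "s = sK K x"
  define p where "p = ix K x"
  define d where "d = delta K x"
  have d_def': "d = s p" unfolding d_def delta_def s_def p_def by simp
  have ip: "1 \<le> p" "p \<le> K" "\<forall>j\<in>{1..K}. s p \<le> s j"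
    using ix_props[OF assms(1), of x] unfolding p_def s_def by auto
  have nK: "K < n" using assms n_def by simp
  have P1: "\<forall>i\<in>{1..K-1}.
            sK K x (i+1) - sK K x i = (sK K x (i+1) - abs_ord x i) / (real K - real i + 1)
          \<and> sK K x (i+1) - sK K x i = (sK K x i - abs_ord x i) / (real K - real i)"
  proof
    fix i assume "i \<in> {1..K-1}"
    from this have ii: "1 \<le> i" "i < K" by auto
    show "sK K x (i+1) - sK K x i = (sK K x (i+1) - abs_ord x i) / (real K - real i + 1)
          \<and> sK K x (i+1) - sK K x i = (sK K x i - abs_ord x i) / (real K - real i)"
      by (rule step) (use ii assms in auto)
  qed
  have P2: "\<forall>i j. 1 \<le> i \<and> i \<le> j \<and> j \<le> ix K x \<longrightarrow> sK K x j \<le> sK K x i"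
  proof (intro allI impI)
    fix i j assume h: "1 \<le> i \<and> i \<le> j \<and> j \<le> ix K x"
    show "sK K x j \<le> sK K x i"
      by (rule chain_down[where f="sK K x"]) (use h strict_before[OF assms] in \<open>fastforce intro: less_imp_le\<close>)+
  qed
  have P3: "\<forall>i j. ix K x \<le> i \<and> i \<le> j \<and> j \<le> K \<longrightarrow> sK K x i \<le> sK K x j"
  proof (intro allI impI)
    fix i j assume h: "ix K x \<le> i \<and> i \<le> j \<and> j \<le> K"
    show "sK K x i \<le> sK K x j"
    proof (cases "p < K")
      case True
      have le: "sK K x p \<le> sK K x (Suc p)" using ip True unfolding s_def by auto
      note ch = up_chain[OF ip(1) True assms(2) le, unfolded s_def]
      show ?thesis
        by (rule chain_up[where f="sK K x"]) (use h ch p_def in auto)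
    next
      case False
      then have "i = j" using h ip(2) p_def by simp
      then show ?thesis by simp
    qed
  qed
  have a_nn: "\<And>j. 1 \<le> j \<Longrightarrow> j \<le> n \<Longrightarrow> 0 \<le> a j" unfolding a_def n_def by (rule abs_ord_nonneg)
  have a_anti: "\<And>i j. 1 \<le> i \<Longrightarrow> i \<le> j \<Longrightarrow> j \<le> n \<Longrightarrow> a j \<le> a i"
    unfolding a_def n_def by (rule abs_ord_antimono)
  have T_p: "s p = (\<Sum>j\<in>{p..n}. a j) / (real K - real p + 1)"
    unfolding s_def sK_def a_def n_def by simp
  have d_nn: "0 \<le> d" unfolding d_def' T_p using T_nonneg[of p x] ip
    unfolding a_def n_def by simp
  have a_p: "a p \<le> d" using a_le_delta[OF assms] unfolding a_def d_def' s_def p_def .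
  have a_before: "p > 1 \<Longrightarrow> d < a (p-1)"
  proof -
    assume "p > 1"
    have lt: "s (Suc (p-1)) < s (p-1)" using strict_before[OF assms, of "p-1"] \<open>p>1\<close>
      unfolding s_def p_def by simp
    have e: "s (p-1+1) - s (p-1) = (s (p-1+1) - a (p-1)) / (real K - real (p-1) + 1)"
      using step[of "p-1" K x] \<open>p>1\<close> ip assms unfolding s_def a_def by simp
    have pos: "real K - real (p-1) + 1 > 0" using ip by simp
    have "(s p - a (p-1)) / (real K - real (p-1) + 1) < 0" using e lt \<open>p>1\<close> by simp
    then have "s p < a (p-1)" using pos by (simp add: divide_less_0_iff)
    then show ?thesis using d_def' by simp
  qed
  define U where "U = (\<lambda>i. if i \<le> p - 1 then a i else if i \<le> K then d else 0)"
  have lenu: "length (uvec K x) = n" unfolding uvec_def n_def by (simp del: upt_Suc)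
  have unth: "\<And>k. k < n \<Longrightarrow> uvec K x ! k = U (Suc k)"
    unfolding uvec_def U_def n_def a_def p_def d_def by (simp del: upt_Suc)
  have U_anti: "\<And>i j. 1 \<le> i \<Longrightarrow> i \<le> j \<Longrightarrow> j \<le> n \<Longrightarrow> U j \<le> U i"
  proof -
    fix i j assume h: "1 \<le> (i::nat)" "i \<le> j" "j \<le> n"
    show "U j \<le> U i"
    proof (cases "j \<le> p - 1")
      case True then show ?thesis unfolding U_def using h a_anti by auto
    next
      case jF: False
      show ?thesis
      proof (cases "i \<le> p - 1")
        case True
        have "p > 1" using True h by simp
        have "a (p-1) \<le> a i" using a_anti[of i "p-1"] True h nK ip by simp
        then show ?thesis unfolding U_def using True jF a_before[OF \<open>p>1\<close>] d_nn by auto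
      next
        case False then show ?thesis unfolding U_def using jF h d_nn by auto
      qed
    qed
  qed
  have ocu: "\<And>i. 1 \<le> i \<Longrightarrow> i \<le> n \<Longrightarrow> ord_comp (uvec K x) i = U i"
  proof -
    fix i assume h: "1 \<le> (i::nat)" "i \<le> n"
    have "ord_comp (uvec K x) i = uvec K x ! (i-1)"
      by (rule ord_comp_sorted) (use lenu unth U_anti in auto)
    then show "ord_comp (uvec K x) i = U i" using unth[of "i-1"] h by simp
  qed
  have oca: "\<And>i. ord_comp (map abs x) i = a i" unfolding a_def abs_ord_def by simp
  have Ua: "\<And>i. 1 \<le> i \<Longrightarrow> i \<le> K \<Longrightarrow> a i \<le> U i"
  proof -
    fix i assume h: "1 \<le> (i::nat)" "i \<le> K"
    show "a i \<le> U i"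
    proof (cases "i \<le> p - 1")
      case False
      then have "a i \<le> a p" using a_anti[of p i] ip h nK by simp
      then show ?thesis unfolding U_def using False h a_p by simp
    qed (simp add: U_def)
  qed
  have key: "(\<Sum>i=1..K. U i) = (\<Sum>i=1..n. a i)"
  proof -
    have "(\<Sum>i=1..K. U i) = (\<Sum>i=1..p-1. U i) + (\<Sum>i=Suc (p-1)..K. U i)"
      by (rule sum_split1) (use ip in simp)
    also have "(\<Sum>i=1..p-1. U i) = (\<Sum>i=1..p-1. a i)" by (rule sum.cong) (auto simp: U_def)
    also have "(\<Sum>i=Suc (p-1)..K. U i) = (\<Sum>i=p..K. d)"
      using ip by (intro sum.cong) (auto simp: U_def)
    also have "\<dots> = (real K - real p + 1) * d" using ip by (simp add: of_nat_diff)
    also have "\<dots> = (\<Sum>j\<in>{p..n}. a j)" unfolding d_def' T_p using ip by simp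
    also have "(\<Sum>i=1..p-1. a i) + (\<Sum>j\<in>{p..n}. a j) = (\<Sum>i=1..n. a i)"
      using sum_split1[of "p-1" n a] ip nK by simp
    finally show ?thesis .
  qed
  have Ufull: "\<And>j. K \<le> j \<Longrightarrow> j \<le> n \<Longrightarrow> (\<Sum>i=1..j. U i) = (\<Sum>i=1..n. a i)"
  proof -
    fix j assume h: "K \<le> (j::nat)" "j \<le> n"
    have "(\<Sum>i=1..j. U i) = (\<Sum>i=1..K. U i) + (\<Sum>i=Suc K..j. U i)" using sum_split1 h by blast
    also have "(\<Sum>i=Suc K..j. U i) = 0" using ip by (intro sum.neutral) (auto simp: U_def)
    finally show "(\<Sum>i=1..j. U i) = (\<Sum>i=1..n. a i)" using key by simp
  qed
  have P4: "majorizes (uvec K x) (map abs x)"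
    unfolding majorizes_def
  proof (intro conjI allI impI)
    show "length (uvec K x) = length (map abs x)" using lenu n_def by simp
  next
    fix j assume "j < length (uvec K x)"
    then have jn: "j < n" using lenu by simp
    have eqU: "(\<Sum>i=1..j. ord_comp (uvec K x) i) = (\<Sum>i=1..j. U i)"
      by (rule sum.cong) (use ocu jn in auto)
    show "(\<Sum>i=1..j. ord_comp (map abs x) i) \<le> (\<Sum>i=1..j. ord_comp (uvec K x) i)"
      unfolding eqU oca
    proof (cases "j \<le> K")
      case True
      show "(\<Sum>i=1..j. a i) \<le> (\<Sum>i=1..j. U i)" by (rule sum_mono) (use Ua True in auto)
    next
      case False
      have "(\<Sum>i=1..j. a i) \<le> (\<Sum>i=1..n. a i)"
        by (rule sum_mono2) (use jn a_nn in auto)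
      then show "(\<Sum>i=1..j. a i) \<le> (\<Sum>i=1..j. U i)" using Ufull[of j] False jn by simp
    qed
  next
    have eqU: "(\<Sum>i=1..length (uvec K x). ord_comp (uvec K x) i) = (\<Sum>i=1..n. U i)"
      unfolding lenu by (rule sum.cong) (use ocu in auto)
    show "(\<Sum>i=1..length (uvec K x). ord_comp (uvec K x) i) = (\<Sum>i=1..length (map abs x). ord_comp (map abs x) i)"
      unfolding eqU oca using Ufull[of n] nK n_def by simp
  qed
  have P5: "uvec K x ! 0 = max (abs_ord x 1) (sK K x 1)"
  proof -
    have u0: "uvec K x ! 0 = U 1" using unth[of 0] nK by simp
    show ?thesis
    proof (cases "p = 1")
      case True
      then show ?thesis using u0 a_p d_def' assms(1) unfolding U_def a_def s_def by (simp add: max_def)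
    next
      case False
      then have "p > 1" using ip by simp
      have lt: "s (Suc 1) < s 1" using strict_before[OF assms, of 1] \<open>p>1\<close>
        unfolding s_def p_def by simp
      have e: "s (1+1) - s 1 = (s 1 - a 1) / (real K - real 1)"
        using step[of 1 K x] assms unfolding s_def a_def by simp
      have pos: "real K - real (1::nat) > 0" using assms by simp
      have "(s 1 - a 1) / (real K - real (1::nat)) < 0" using e lt by simp
      then have "s 1 < a 1" using pos by (simp add: divide_less_0_iff)
      moreover have "1 \<le> p - 1" using \<open>p>1\<close> by simp
      ultimately show ?thesis using u0 unfolding U_def a_def s_def by simp
    qed
  qed
  show ?thesis using P1 P2 P3 P4 P5 by blast
qed

end
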